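(* Let $\beta_1,\dots,\beta_d$ be fixed positive reals and let $c>0$ satisfy $c\le\sum_{i=1}^d\beta_i$. Over positive reals $\alpha_1,\dots,\alpha_d$ with $\sum_{i=1}^d\alpha_i=c$, the minimum of $$f(\alpha_1,\dots,\alpha_d)=\sum_{i=1}^d\frac{\beta_i}{\alpha_i}+\sum_{i=1}^d\ln\alpha_i$$ is achieved at $\alpha_i^*=\frac{\sqrt{1-4\lambda^*\beta_i}-1}{-2\lambda^*}$, where $\lambda^*\le0$ is the unique solution of $\sum_{i=1}^d\frac{2\beta_i}{1+\sqrt{1-4\lambda^*\beta_i}}=c$. *)

theory Defs
  imports Complex_Main
begin

definition obj :: "nat \<Rightarrow> (nat \<Rightarrow> real) \<Rightarrow> (nat \<Rightarrow> real) \<Rightarrow> real" where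
  "obj d \<beta> \<alpha> = (\<Sum>i=1..d. \<beta> i / \<alpha> i) + (\<Sum>i=1..d. ln (\<alpha> i))"

text \<open>alpha_i^* = (sqrt(1 - 4 lam beta_i) - 1)/(-2 lam); at lam = 0 the formula is
  read as its limit beta_i (the value of 2 beta_i/(1 + sqrt(1 - 4 lam beta_i))).\<close>
definition alpha_star :: "real \<Rightarrow> real \<Rightarrow> real" where
  "alpha_star lam b = (if lam = 0 then b else (sqrt (1 - 4 * lam * b) - 1) / (- 2 * lam))"

end

theory Submission
  imports Defs "HOL-Real_Asymp.Real_Asymp"
begin

lemma aux_div: "(u::real) \<noteq> 0 \<Longrightarrow> 2*b/u - l*(2*b/u)^2 = (2*b*u - l*(2*b)^2)/u^2"
  by (simp add: field_simps power2_eq_square)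

lemma as_facts:
  fixes l b :: real
  assumes "l \<le> 0" "b > 0"
  shows "alpha_star l b = 2 * b / (1 + sqrt (1 - 4 * l * b))"
    and "alpha_star l b > 0"
    and "b = alpha_star l b - l * (alpha_star l b)^2"
proof -
  define s where "s = sqrt (1 - 4 * l * b)"
  have lb: "l * b \<le> 0" using assms by (simp add: mult_nonpos_nonneg)
  have s1: "s \<ge> 1" unfolding s_def using lb by (simp add: mult.commute)
  have s2: "s^2 = 1 - 4 * l * b" unfolding s_def using lb by (simp add: mult.commute)
  have e: "alpha_star l b = 2 * b / (1 + s)"
  proof (cases "l = 0")
    case True then show ?thesis by (simp add: alpha_star_def s_def)
  next
    case False
    have "(s - 1) / (- 2 * l) = 2 * b / (1 + s)"
      using False s1 s2 by (simp add: field_simps power2_eq_square)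
    then show ?thesis using False by (simp add: alpha_star_def s_def)
  qed
  then show "alpha_star l b = 2 * b / (1 + sqrt (1 - 4 * l * b))" by (simp add: s_def)
  show "alpha_star l b > 0" using e s1 assms by simp
  have q0: "4 * l * b = 1 - s^2" using s2 by simp
  have q1': "l * (2 * b)^2 = b * (4 * l * b)" by (simp add: power2_eq_square algebra_simps)
  have q1: "l * (2 * b)^2 = b * (1 - s^2)" using q1' unfolding q0 .
  have q2: "2 * b * (1 + s) - l * (2 * b)^2 = b * (1 + s)^2" unfolding q1
    by (simp add: power2_eq_square algebra_simps)
  have "2 * b / (1 + s) - l * (2 * b / (1 + s))^2 = (2 * b * (1 + s) - l * (2 * b)^2) / (1 + s)^2"
    using s1 by (intro aux_div) simp
  also have "\<dots> = b" unfolding q2 using s1 by simp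
  finally have "2 * b / (1 + s) - l * (2 * b / (1 + s))^2 = b" .
  then show "b = alpha_star l b - l * (alpha_star l b)^2" using e by simp
qed

lemma h_min:
  fixes l b a :: real
  assumes "l \<le> 0" "b > 0" "a > 0"
  shows "b / alpha_star l b + ln (alpha_star l b) - l * alpha_star l b \<le> b / a + ln a - l * a"
proof -
  define x where "x = alpha_star l b"
  have xp: "x > 0" and bx: "b = x - l * x^2" using as_facts[OF assms(1,2)] by (auto simp: x_def)
  have ln1: "ln (a / x) \<ge> 1 - x / a"
  proof -
    have "ln (x / a) \<le> x / a - 1" using xp assms by (intro ln_le_minus_one) auto
    moreover have "ln (a / x) = - ln (x / a)" using xp assms by (simp add: ln_div)
    ultimately show ?thesis by simp
  qed
  have lnd: "ln (a / x) = ln a - ln x" using xp assms by (simp add: ln_div)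
  have key: "b / a - b / x + (1 - x / a) - l * (a - x) = - l * (x - a)^2 / a"
    using xp assms by (simp add: bx field_simps power2_eq_square)
  have "- l * (x - a)^2 / a \<ge> 0" using assms by (intro divide_nonneg_pos mult_nonneg_nonneg) auto
  then show ?thesis using key ln1 lnd unfolding x_def[symmetric]
    by (simp add: right_diff_distrib)
qed

lemma term_lim:
  fixes b :: real
  assumes "b > 0"
  shows "((\<lambda>l. 2 * b / (1 + sqrt (1 - 4 * l * b))) \<longlongrightarrow> 0) at_bot"
  using assms by real_asymp

lemma den_pos: "(l::real) \<le> 0 \<Longrightarrow> b > 0 \<Longrightarrow> 0 < 1 + sqrt (1 - 4 * l * b)"
proof -
  assume "l \<le> 0" "b > 0"
  then have "l * b \<le> 0" by (simp add: mult_nonpos_nonneg)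
  then have "0 \<le> sqrt (1 - 4 * l * b)" by (simp add: mult.assoc)
  then show ?thesis by linarith
qed

lemma term_strict:
  fixes b l1 l2 :: real
  assumes "b > 0" "l1 < l2" "l2 \<le> 0"
  shows "2 * b / (1 + sqrt (1 - 4 * l1 * b)) < 2 * b / (1 + sqrt (1 - 4 * l2 * b))"
proof -
  have "1 - 4 * l2 * b < 1 - 4 * l1 * b" using assms by simp
  then have "sqrt (1 - 4 * l2 * b) < sqrt (1 - 4 * l1 * b)" by simp
  moreover have "0 < 1 + sqrt (1 - 4 * l2 * b)"
    using den_pos[OF assms(3,1)] .
  moreover have "0 < 1 + sqrt (1 - 4 * l1 * b)"
    using den_pos[of l1 b] assms by simp
  ultimately show ?thesis using assms by (intro divide_strict_left_mono) auto
qed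

lemma obj_split:
  "(\<Sum>i=1..d. \<beta> i / a i + ln (a i) - l * a i) = obj d \<beta> a - l * (\<Sum>i=1..d. a i)"
  by (simp add: obj_def sum.distrib sum_subtractf sum_distrib_left)

theorem lemma11:
  fixes d :: nat and \<beta> :: "nat \<Rightarrow> real" and c :: real
  assumes "\<forall>i\<in>{1..d}. \<beta> i > 0"
    and "c > 0"
    and "c \<le> (\<Sum>i=1..d. \<beta> i)"
  shows "(\<exists>!lam. lam \<le> 0 \<and> (\<Sum>i=1..d. 2 * \<beta> i / (1 + sqrt (1 - 4 * lam * \<beta> i))) = c)
    \<and> (\<forall>lam. lam \<le> 0 \<and> (\<Sum>i=1..d. 2 * \<beta> i / (1 + sqrt (1 - 4 * lam * \<beta> i))) = c \<longrightarrow>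
          (\<forall>i\<in>{1..d}. alpha_star lam (\<beta> i) > 0)
        \<and> (\<Sum>i=1..d. alpha_star lam (\<beta> i)) = c
        \<and> (\<forall>\<alpha>. (\<forall>i\<in>{1..d}. \<alpha> i > 0) \<and> (\<Sum>i=1..d. \<alpha> i) = c \<longrightarrow>
               obj d \<beta> (\<lambda>i. alpha_star lam (\<beta> i)) \<le> obj d \<beta> \<alpha>))"
proof (intro conjI allI impI)
  define S where "S = (\<lambda>lam. \<Sum>i=1..d. 2 * \<beta> i / (1 + sqrt (1 - 4 * lam * \<beta> i)))"
  have d1: "d \<ge> 1"
  proof (rule ccontr)
    assume "\<not> d \<ge> 1" then have "d = 0" by simp
    then show False using assms(2,3) by simp
  qed
  have smono: "S l1 < S l2" if "l1 < l2" "l2 \<le> 0" for l1 l2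
    unfolding S_def using d1 assms(1) that
    by (intro sum_strict_mono) (auto intro: term_strict)
  have S0: "S 0 = (\<Sum>i=1..d. \<beta> i)" unfolding S_def by simp
  have "((\<lambda>lam. S lam) \<longlongrightarrow> (\<Sum>i=1..d. 0)) at_bot"
    unfolding S_def using assms(1) by (intro tendsto_sum term_lim) auto
  then have "\<forall>\<^sub>F lam in at_bot. S lam < c" using assms(2)
    by (intro order_tendstoD(2)) auto
  then obtain L where L: "\<And>l. l \<le> L \<Longrightarrow> S l < c" by (auto simp: eventually_at_bot_linorder)
  define L' where "L' = min L 0"
  have cont: "continuous_on {L'..0} S" unfolding S_def
    by (intro continuous_intros) (use assms(1) den_pos in \<open>fastforce simp: L'_def\<close>)
  have "\<exists>x. L' \<le> x \<and> x \<le> 0 \<and> S x = c"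
    by (rule IVT'[OF _ _ _ cont]) (use L[of L'] S0 assms(3) in \<open>auto simp: L'_def\<close>)
  then obtain x where x: "x \<le> 0" "S x = c" by blast
  show "\<exists>!lam. lam \<le> 0 \<and> (\<Sum>i=1..d. 2 * \<beta> i / (1 + sqrt (1 - 4 * lam * \<beta> i))) = c"
  proof (rule ex1I[of _ x])
    show "x \<le> 0 \<and> (\<Sum>i=1..d. 2 * \<beta> i / (1 + sqrt (1 - 4 * x * \<beta> i))) = c"
      using x by (simp add: S_def)
  next
    fix y assume "y \<le> 0 \<and> (\<Sum>i=1..d. 2 * \<beta> i / (1 + sqrt (1 - 4 * y * \<beta> i))) = c"
    then have "S y = c" by (simp add: S_def)
    then show "y = x" using x smono[of x y] smono[of y x] \<open>y \<le> 0 \<and> _\<close> by (cases x y rule: linorder_cases) auto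
  qed
next
  fix lam assume h: "lam \<le> 0 \<and> (\<Sum>i=1..d. 2 * \<beta> i / (1 + sqrt (1 - 4 * lam * \<beta> i))) = c"
  show "\<forall>i\<in>{1..d}. alpha_star lam (\<beta> i) > 0" using h assms(1) as_facts(2) by blast
  show sa: "(\<Sum>i=1..d. alpha_star lam (\<beta> i)) = c"
    using h assms(1) as_facts(1) by (auto intro!: sum.cong simp del: h)
next
  fix lam \<alpha> assume h: "lam \<le> 0 \<and> (\<Sum>i=1..d. 2 * \<beta> i / (1 + sqrt (1 - 4 * lam * \<beta> i))) = c"
    and ha: "(\<forall>i\<in>{1..d}. \<alpha> i > 0) \<and> (\<Sum>i=1..d. \<alpha> i) = c"
  have sa: "(\<Sum>i=1..d. alpha_star lam (\<beta> i)) = c"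
  proof -
    have "(\<Sum>i=1..d. alpha_star lam (\<beta> i)) = (\<Sum>i=1..d. 2 * \<beta> i / (1 + sqrt (1 - 4 * lam * \<beta> i)))"
      using h assms(1) as_facts(1) by (intro sum.cong) auto
    then show ?thesis using h by simp
  qed
  have "(\<Sum>i=1..d. \<beta> i / alpha_star lam (\<beta> i) + ln (alpha_star lam (\<beta> i)) - lam * alpha_star lam (\<beta> i))
      \<le> (\<Sum>i=1..d. \<beta> i / \<alpha> i + ln (\<alpha> i) - lam * \<alpha> i)"
    using h ha assms(1) by (intro sum_mono h_min) auto
  then show "obj d \<beta> (\<lambda>i. alpha_star lam (\<beta> i)) \<le> obj d \<beta> \<alpha>"
    unfolding obj_split[where a="\<lambda>i. alpha_star lam (\<beta> i)", simplified] obj_split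
    using sa ha by simp
qed

end
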